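(* $\textsc{DiffBest}(\mathsf{T}\mathsf{S}\mathsf{T},\mathsf{S}\mathsf{T}\mathsf{S}\mathsf{T},n)=\Theta(n)$ and $\textsc{DiffBest}(\mathsf{S}\mathsf{T}\mathsf{S}\mathsf{T},\mathsf{T}\mathsf{S}\mathsf{T},n)=\Theta(n)$, where for sequences $X,Y$, $\textsc{DiffBest}(X,Y,n)=\max\{|\mathrm{Best}_{\succ_X}(r)\setminus\mathrm{Best}_{\succ_Y}(r)|\}$, the maximum taken over all initial preference formulas and all t-relations $r$ with $|r|=n$.
   Context: Fix attribute–taxonomy pairs $A_1{:}T_1,\dots,A_d{:}T_d$ with distinct attribute names, where each taxonomy $T_i=(V_i,\le_{V_i})$ is a poset. A t-tuple over a t-schema $S\subseteq\{A_1{:}T_1,\dots,A_d{:}T_d\}$ maps each $A_i$ in $S$ to a value of $V_i$; $\mathcal{D}$ is the set of all t-tuples over all such t-schemas, and a t-relation is a finite set of t-tuples. A preference relation is a binary relation $\succeq$ on $\mathcal{D}$; its strict part is $t_1\succ t_2$ iff $t_1\succeq t_2$ and not $t_2\succeq t_1$. Preferences are given by a formula $F(x,y)=\bigvee_i P_i(x,y)$, a disjunction of statements; each statement $P_i$ is a disjunction of clauses, each clause a satisfiable conjunction of atoms of the forms $x[A_i]\le_{V_i} v$, $x[A_i]\not\le_{V_i} v$, $y[A_i]\le_{V_i} v$, $y[A_i]\not\le_{V_i} v$; the formula induces $t_1\succeq t_2\iff F(t_1,t_2)$. Operator $\mathsf{T}$ maps a formula to one inducing the transitive closure over $\mathcal{D}$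 of the induced relation. Operator $\mathsf{S}$ (specificity-based refinement): repeat rounds; in a round, for each statement $P_i$ let $\mathrm{Impl}(P_i)$ be the set of statements $P_j$ such that $P_j(t_2,t_1)\Rightarrow P_i(t_1,t_2)$ for all $t_1,t_2\in\mathcal{D}$ but not conversely; simultaneously replace every $P_i$ with nonempty $\mathrm{Impl}(P_i)$ by $P_i(x,y)\wedge\bigwedge_{P_j\in \mathrm{Impl}(P_i)}\neg P_j(y,x)$; stop when no $\mathrm{Impl}$ set is nonempty. After each operator, contradictory clauses and subsumed statements are removed. For $X\in\{\mathsf{T},\mathsf{S}\}^*$, $\succeq_X$ (strict part $\succ_X$) is the relation induced by applying the operators of $X$ in order to the initial formula. The Best operator is $\mathrm{Best}_\succ(r)=\{t_1\in r\mid \nexists t_2\in r,\ t_2\succ t_1\}$. *)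

theory Defs
  imports Main "HOL-Library.Landau_Symbols"
begin

(* t-tuples: attribute index i (attribute A_(i+1), i < d) maps to a value; None = attribute
   not in the t-schema of the tuple.  Values of every taxonomy are drawn from nat. *)
type_synonym tup = "nat \<Rightarrow> nat option"
type_synonym srel = "tup \<Rightarrow> tup \<Rightarrow> bool"

definition taxonomies_ok :: "nat \<Rightarrow> (nat \<Rightarrow> nat set) \<Rightarrow> (nat \<Rightarrow> nat \<Rightarrow> nat \<Rightarrow> bool) \<Rightarrow> bool" where
  "taxonomies_ok d V le \<longleftrightarrow> (\<forall>i<d. finite (V i)
      \<and> (\<forall>a\<in>V i. le i a a)
      \<and> (\<forall>a\<in>V i. \<forall>b\<in>V i. le i a b \<and> le i b a \<longrightarrow> a = b)
      \<and> (\<forall>a\<in>V i. \<forall>b\<in>V i. \<forall>c\<in>V i. le i a b \<and> le i b c \<longrightarrow> le i a c))"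

definition tuples :: "nat \<Rightarrow> (nat \<Rightarrow> nat set) \<Rightarrow> tup set" where
  "tuples d V = {t. dom t \<subseteq> {..<d} \<and> (\<forall>i a. t i = Some a \<longrightarrow> a \<in> V i)}"

datatype var = VX | VY
datatype atom = Le var nat nat | NLe var nat nat
type_synonym clause = "atom list"        (* conjunction *)
type_synonym statement = "clause list"   (* disjunction *)
type_synonym formula = "statement list"  (* disjunction *)

fun pick :: "var \<Rightarrow> tup \<Rightarrow> tup \<Rightarrow> tup" where
  "pick VX x y = x" | "pick VY x y = y"

(* an atom on an attribute absent from the tuple is false *)
fun atom_sem :: "(nat \<Rightarrow> nat \<Rightarrow> nat \<Rightarrow> bool) \<Rightarrow> atom \<Rightarrow> srel" where
  "atom_sem le (Le w i v) x y = (case pick w x y i of Some a \<Rightarrow> le i a v | None \<Rightarrow> False)"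
| "atom_sem le (NLe w i v) x y = (case pick w x y i of Some a \<Rightarrow> \<not> le i a v | None \<Rightarrow> False)"

definition clause_sem :: "(nat \<Rightarrow> nat \<Rightarrow> nat \<Rightarrow> bool) \<Rightarrow> clause \<Rightarrow> srel" where
  "clause_sem le c x y \<longleftrightarrow> (\<forall>a\<in>set c. atom_sem le a x y)"

definition stmt_sem :: "nat \<Rightarrow> (nat \<Rightarrow> nat set) \<Rightarrow> (nat \<Rightarrow> nat \<Rightarrow> nat \<Rightarrow> bool) \<Rightarrow> statement \<Rightarrow> srel" where
  "stmt_sem d V le P x y \<longleftrightarrow> x \<in> tuples d V \<and> y \<in> tuples d V \<and> (\<exists>c\<in>set P. clause_sem le c x y)"

fun atom_ok :: "nat \<Rightarrow> (nat \<Rightarrow> nat set) \<Rightarrow> atom \<Rightarrow> bool" where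
  "atom_ok d V (Le w i v) \<longleftrightarrow> i < d \<and> v \<in> V i"
| "atom_ok d V (NLe w i v) \<longleftrightarrow> i < d \<and> v \<in> V i"

definition formula_ok :: "nat \<Rightarrow> (nat \<Rightarrow> nat set) \<Rightarrow> (nat \<Rightarrow> nat \<Rightarrow> nat \<Rightarrow> bool) \<Rightarrow> formula \<Rightarrow> bool" where
  "formula_ok d V le F \<longleftrightarrow> (\<forall>P\<in>set F. P \<noteq> [] \<and> (\<forall>c\<in>set P.
      (\<forall>a\<in>set c. atom_ok d V a) \<and>
      (\<exists>x\<in>tuples d V. \<exists>y\<in>tuples d V. clause_sem le c x y)))"

definition init_sem :: "nat \<Rightarrow> (nat \<Rightarrow> nat set) \<Rightarrow> (nat \<Rightarrow> nat \<Rightarrow> nat \<Rightarrow> bool) \<Rightarrow> formula \<Rightarrow> srel set" where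
  "init_sem d V le F = stmt_sem d V le ` set F"

definition induced :: "srel set \<Rightarrow> srel" where
  "induced F x y \<longleftrightarrow> (\<exists>P\<in>F. P x y)"

definition strict :: "srel set \<Rightarrow> srel" where
  "strict F x y \<longleftrightarrow> induced F x y \<and> \<not> induced F y x"

definition cleanup :: "srel set \<Rightarrow> srel set" where
  "cleanup F = {P \<in> F. (\<exists>x y. P x y) \<and> \<not> (\<exists>Q\<in>F. P < Q)}"

definition compose :: "tup set \<Rightarrow> srel \<Rightarrow> srel \<Rightarrow> srel" where
  "compose D P Q x y \<longleftrightarrow> (\<exists>z\<in>D. P x z \<and> Q z y)"

inductive_set comps :: "tup set \<Rightarrow> srel set \<Rightarrow> srel set" for D F where
  base: "P \<in> F \<Longrightarrow> P \<in> comps D F"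
| step: "P \<in> F \<Longrightarrow> Q \<in> comps D F \<Longrightarrow> compose D P Q \<in> comps D F"

definition opT :: "tup set \<Rightarrow> srel set \<Rightarrow> srel set" where
  "opT D F = cleanup (comps D F)"

definition Impl :: "srel set \<Rightarrow> srel \<Rightarrow> srel set" where
  "Impl F P = {Q \<in> F. (\<forall>x y. Q y x \<longrightarrow> P x y) \<and> \<not> (\<forall>x y. P x y \<longrightarrow> Q y x)}"

definition round :: "srel set \<Rightarrow> srel set" where
  "round F = (\<lambda>P. if Impl F P = {} then P
                   else (\<lambda>x y. P x y \<and> (\<forall>Q\<in>Impl F P. \<not> Q y x))) ` F"

definition stable :: "srel set \<Rightarrow> bool" where
  "stable F \<longleftrightarrow> (\<forall>P\<in>F. Impl F P = {})"

definition opS :: "srel set \<Rightarrow> srel set" where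
  "opS F = cleanup ((round ^^ (LEAST k. stable ((round ^^ k) F))) F)"

datatype op = T | S

definition apply_op :: "tup set \<Rightarrow> srel set \<Rightarrow> op \<Rightarrow> srel set" where
  "apply_op D F o' = (case o' of T \<Rightarrow> opT D F | S \<Rightarrow> opS F)"

definition apply_ops :: "tup set \<Rightarrow> op list \<Rightarrow> srel set \<Rightarrow> srel set" where
  "apply_ops D X F = foldl (apply_op D) F X"

definition Best :: "srel \<Rightarrow> tup set \<Rightarrow> tup set" where
  "Best R r = {t1 \<in> r. \<not> (\<exists>t2\<in>r. R t2 t1)}"

(* DiffBest(X,Y,n): maximum (Sup of a bounded set of nats; the set is infinite) over all attribute/taxonomy systems, all initial formulas and
   all t-relations r with |r| = n *)
definition DiffBest :: "op list \<Rightarrow> op list \<Rightarrow> nat \<Rightarrow> nat" where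
  "DiffBest X Y n = Sup {card (Best (strict (apply_ops (tuples d V) X (init_sem d V le F))) r
                              - Best (strict (apply_ops (tuples d V) Y (init_sem d V le F))) r)
       | d V le F r. taxonomies_ok d V le \<and> formula_ok d V le F \<and>
                     finite r \<and> r \<subseteq> tuples d V \<and> card r = n}"

end

theory Submission
  imports Defs
begin

lemma le_rel: "(P::srel) \<le> Q \<longleftrightarrow> (\<forall>x y. P x y \<longrightarrow> Q x y)"
  by (auto simp: le_fun_def)

lemma comps_bound:
  assumes FG: "F \<subseteq> G"
    and clos: "\<And>P Q. P \<in> F \<Longrightarrow> Q \<in> G \<Longrightarrow> (\<exists>g\<in>G. compose D P Q \<le> g) \<or> (\<forall>x y. \<not> compose D P Q x y)"
    and R: "R \<in> comps D F"
  shows "(\<exists>g\<in>G. R \<le> g) \<or> (\<forall>x y. \<not> R x y)"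
  using R
proof induction
  case (base P) then show ?case using FG by auto
next
  case (step P Q)
  from step.IH show ?case
  proof
    assume "\<exists>g\<in>G. Q \<le> g"
    then obtain g where g: "g\<in>G" "Q \<le> g" by blast
    have mono: "compose D P Q \<le> compose D P g" using g(2) by (auto simp: compose_def le_rel)
    from clos[OF step.hyps(1) g(1)] show ?case
    proof
      assume "\<exists>h\<in>G. compose D P g \<le> h" then show ?case using mono order_trans by blast
    next
      assume "\<forall>x y. \<not> compose D P g x y" then show ?case using mono by (auto simp: le_rel)
    qed
  next
    assume "\<forall>x y. \<not> Q x y" then show ?case by (auto simp: compose_def)
  qed
qed

lemma opT_char:
  assumes FG: "F \<subseteq> G" and GC: "G \<subseteq> comps D F"
    and clos: "\<And>P Q. P \<in> F \<Longrightarrow> Q \<in> G \<Longrightarrow> (\<exists>g\<in>G. compose D P Q \<le> g) \<or> (\<forall>x y. \<not> compose D P Q x y)"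
  shows "opT D F = {g\<in>G. (\<exists>x y. g x y) \<and> \<not>(\<exists>h\<in>G. g < h)}"
proof (rule set_eqI, rule iffI)
  fix R assume "R \<in> opT D F"
  then have R: "R \<in> comps D F" "\<exists>x y. R x y" "\<not>(\<exists>Q\<in>comps D F. R < Q)"
    by (auto simp: opT_def cleanup_def)
  from comps_bound[OF FG clos R(1)] R(2) obtain g where g: "g\<in>G" "R \<le> g" by blast
  have "g \<in> comps D F" using GC g by blast
  then have "R = g" using R(3) g(2) by (auto simp: less_le)
  then show "R \<in> {g\<in>G. (\<exists>x y. g x y) \<and> \<not>(\<exists>h\<in>G. g < h)}" using R g GC by auto
next
  fix g assume g: "g \<in> {g\<in>G. (\<exists>x y. g x y) \<and> \<not>(\<exists>h\<in>G. g < h)}"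
  have "\<not>(\<exists>Q\<in>comps D F. g < Q)"
  proof
    assume "\<exists>Q\<in>comps D F. g < Q"
    then obtain Q where Q: "Q \<in> comps D F" "g < Q" by blast
    from comps_bound[OF FG clos Q(1)] show False
    proof
      assume "\<exists>h\<in>G. Q \<le> h"
      then obtain h where "h \<in> G" "Q \<le> h" by blast
      then show False using g Q(2) less_le_trans by blast
    next
      assume "\<forall>x y. \<not> Q x y"
      then show False using g Q(2) by (auto simp: less_le le_rel)
    qed
  qed
  then show "g \<in> opT D F" using g GC by (auto simp: opT_def cleanup_def)
qed

lemma opS_stable: "stable F \<Longrightarrow> opS F = cleanup F"
  by (simp add: opS_def)

lemma opS_one: assumes "\<not> stable F" "stable (round F)" shows "opS F = cleanup (round F)"
proof -
  have "(LEAST k. stable ((round^^k) F)) = 1"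
  proof (rule Least_equality)
    show "stable ((round^^1) F)" using assms by simp
  next
    fix y assume "stable ((round^^y) F)"
    then show "1 \<le> y" using assms by (cases y) auto
  qed
  then show ?thesis by (simp add: opS_def)
qed


locale g1 =
  fixes D :: "tup set" and A B :: "tup \<Rightarrow> bool"
  assumes AD: "A t \<Longrightarrow> t \<in> D" and BD: "B t \<Longrightarrow> t \<in> D"
    and AB: "A t \<Longrightarrow> \<not> B t" and exA: "\<exists>t. A t" and exB: "\<exists>t. B t"
begin

lemma BA: "B t \<Longrightarrow> \<not> A t" using AB by blast

definition "P1 = (\<lambda>x y. B x \<and> A y \<or> A x \<and> B y)"
definition "P2 = (\<lambda>x y. B x \<and> A y)"
definition "I1 = (\<lambda>x y. A x \<and> A y \<or> B x \<and> B y)"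

lemmas defs = P1_def P2_def I1_def compose_def le_rel

lemma ne: "\<exists>x y. P1 x y" "\<exists>x y. P2 x y" "\<exists>x y. I1 x y"
  using exA exB by (auto simp: defs)

lemma wit: obtains a b where "A a" "B b" "a \<in> D" "b \<in> D"
  using exA exB AD BD by blast

lemma lt: "P2 < P1" "\<not> P1 < I1" "\<not> I1 < P1" "\<not> P1 < P2" "\<not> I1 < P2"
proof -
  obtain a b where ab: "A a" "B b" by (rule wit)
  have nb: "\<not> B a" "\<not> A b" using ab AB BA by auto
  show "P2 < P1" "\<not> P1 < I1" "\<not> I1 < P1" "\<not> P1 < P2" "\<not> I1 < P2"
    unfolding less_le_not_le defs using ab nb by blast+
qed

lemma compI: "compose D P1 P1 = I1"
proof -
  obtain a b where ab: "A a" "B b" using exA exB by blast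
  show ?thesis using ab AD BD AB BA by (auto simp: fun_eq_iff defs)
qed

lemma T1: "opT D {P1,P2} = {P1, I1}"
proof -
  have "opT D {P1,P2} = {g\<in>{P1,P2,I1}. (\<exists>x y. g x y) \<and> \<not>(\<exists>h\<in>{P1,P2,I1}. g < h)}"
  proof (rule opT_char)
    show "{P1,P2,I1} \<subseteq> comps D {P1,P2}"
      using comps.base[of P1 "{P1,P2}" D] comps.base[of P2 "{P1,P2}" D]
        comps.step[of P1 "{P1,P2}" P1 D] compI by auto
  next
    fix P Q assume "P \<in> {P1,P2}" "Q \<in> {P1,P2,I1}"
    then show "(\<exists>g\<in>{P1,P2,I1}. compose D P Q \<le> g) \<or> (\<forall>x y. \<not> compose D P Q x y)"
      using AB BA by (auto simp: defs)
  qed auto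
  also have "\<dots> = {P1, I1}" using ne lt by auto
  finally show ?thesis .
qed

lemma cl1: "cleanup {P1, I1} = {P1, I1}"
  using ne lt by (auto simp: cleanup_def)

lemma cl2: "cleanup {P2} = {P2}"
  using ne by (auto simp: cleanup_def)

lemma st1: "stable {P1, I1}"
proof -
  obtain a b where ab: "A a" "B b" by (rule wit)
  have nb: "\<not> B a" "\<not> A b" using ab AB BA by auto
  have "\<not> ((\<forall>x y. Q y x \<longrightarrow> P x y) \<and> \<not> (\<forall>x y. P x y \<longrightarrow> Q y x))"
    if "Q \<in> {P1,I1}" "P \<in> {P1,I1}" for P Q
  proof -
    have 1: "\<not> (\<forall>x y. I1 y x \<longrightarrow> P1 x y)" unfolding defs using ab nb by blast
    have 2: "\<not> (\<forall>x y. P1 y x \<longrightarrow> I1 x y)" unfolding defs using ab nb by blast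
    have 3: "\<forall>x y. P1 x y \<longrightarrow> P1 y x" "\<forall>x y. I1 x y \<longrightarrow> I1 y x" unfolding defs by blast+
    show ?thesis using that 1 2 3 by auto
  qed
  then show ?thesis unfolding stable_def Impl_def by blast
qed

lemma st2: "stable {P2}"
proof -
  obtain a b where ab: "A a" "B b" by (rule wit)
  have nb: "\<not> B a" "\<not> A b" using ab AB BA by auto
  have 1: "\<not> (\<forall>x y. P2 y x \<longrightarrow> P2 x y)" unfolding defs using ab nb by blast
  then show ?thesis unfolding stable_def Impl_def by blast
qed

lemma T2: "opT D {P1,I1} = {P1, I1}"
proof -
  have "opT D {P1,I1} = {g\<in>{P1,I1}. (\<exists>x y. g x y) \<and> \<not>(\<exists>h\<in>{P1,I1}. g < h)}"
  proof (rule opT_char)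
    show "{P1,I1} \<subseteq> comps D {P1,I1}" using comps.base by blast
  next
    fix P Q assume "P \<in> {P1,I1}" "Q \<in> {P1,I1}"
    then show "(\<exists>g\<in>{P1,I1}. compose D P Q \<le> g) \<or> (\<forall>x y. \<not> compose D P Q x y)"
      using AB BA by (auto simp: defs)
  qed auto
  also have "\<dots> = {P1, I1}" using ne lt by auto
  finally show ?thesis .
qed

lemma T3: "opT D {P2} = {P2}"
proof -
  have "opT D {P2} = {g\<in>{P2}. (\<exists>x y. g x y) \<and> \<not>(\<exists>h\<in>{P2}. g < h)}"
  proof (rule opT_char)
    show "{P2} \<subseteq> comps D {P2}" using comps.base by blast
  next
    fix P Q assume "P \<in> {P2}" "Q \<in> {P2}"
    then show "(\<exists>g\<in>{P2}. compose D P Q \<le> g) \<or> (\<forall>x y. \<not> compose D P Q x y)"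
      using AB BA by (auto simp: defs)
  qed auto
  also have "\<dots> = {P2}" using ne by auto
  finally show ?thesis .
qed

lemma Impl_a: "Impl {P1,P2} P1 = {P2}"
proof -
  obtain a b where ab: "A a" "B b" by (rule wit)
  have nb: "\<not> B a" "\<not> A b" using ab AB BA by auto
  have c1: "\<not> ((\<forall>x y. P1 y x \<longrightarrow> P1 x y) \<and> \<not> (\<forall>x y. P1 x y \<longrightarrow> P1 y x))"
    unfolding defs by blast
  have c2: "(\<forall>x y. P2 y x \<longrightarrow> P1 x y) \<and> \<not> (\<forall>x y. P1 x y \<longrightarrow> P2 y x)"
    unfolding defs using ab nb by blast
  show ?thesis unfolding Impl_def using c1 c2 by auto
qed

lemma Impl_b: "Impl {P1,P2} P2 = {}"
proof -
  obtain a b where ab: "A a" "B b" by (rule wit)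
  have nb: "\<not> B a" "\<not> A b" using ab AB BA by auto
  have 1: "\<not> (\<forall>x y. P2 y x \<longrightarrow> P2 x y)" unfolding defs using ab nb by blast
  have 2: "\<not> (\<forall>x y. P1 y x \<longrightarrow> P2 x y)" unfolding defs using ab nb by blast
  show ?thesis unfolding Impl_def using 1 2 by auto
qed

lemma rnd: "round {P1,P2} = {P2}"
proof -
  have e0: "P1 x y \<and> \<not> P2 y x \<longleftrightarrow> P2 x y" for x y
    using AB BA unfolding P1_def P2_def by blast
  have e: "(\<lambda>x y. P1 x y \<and> (\<forall>Q\<in>{P2}. \<not> Q y x)) = P2"
    by (rule ext, rule ext) (use e0 in simp)
  let ?f = "\<lambda>P. if Impl {P1,P2} P = {} then P
                   else (\<lambda>x y. P x y \<and> (\<forall>Q\<in>Impl {P1,P2} P. \<not> Q y x))"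
  have f1: "?f P1 = P2" unfolding Impl_a using e by simp
  have f2: "?f P2 = P2" unfolding Impl_b by simp
  have "round {P1,P2} = ?f ` {P1,P2}" unfolding round_def ..
  also have "\<dots> = {?f P1, ?f P2}" by (simp only: image_insert image_empty)
  finally show ?thesis using f1 f2 by simp
qed

lemma nst: "\<not> stable {P1,P2}"
  using Impl_a by (auto simp: stable_def)

lemma TST: "apply_ops D [T,S,T] {P1,P2} = {P1, I1}"
  by (simp add: apply_ops_def apply_op_def T1 opS_stable[OF st1] cl1 T2)

lemma STST: "apply_ops D [S,T,S,T] {P1,P2} = {P2}"
  by (simp add: apply_ops_def apply_op_def opS_one[OF nst] rnd st2 cl2 T3 opS_stable)

lemma strict1: "strict {P1, I1} x y = False"
  by (auto simp: strict_def induced_def defs)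

lemma strict2: "strict {P2} x y = P2 x y"
  using AB BA by (auto simp: strict_def induced_def defs)

lemma diff1: assumes "b \<in> r" "B b" shows "{t\<in>r. A t} \<subseteq>
  Best (strict (apply_ops D [T,S,T] {P1,P2})) r - Best (strict (apply_ops D [S,T,S,T] {P1,P2})) r"
  unfolding TST STST strict1 strict2 using assms AB by (auto simp: Best_def P2_def)

end

lemma not_le_wit: "P u v \<Longrightarrow> \<not> Q u v \<Longrightarrow> \<not> (P::srel) \<le> Q"
  by (auto simp: le_rel)
lemma not_lt1: "\<not> (P::srel) \<le> Q \<Longrightarrow> \<not> P < Q" by (simp add: less_le_not_le)
lemma not_lt2: "(Q::srel) \<le> P \<Longrightarrow> \<not> P < Q" by (simp add: less_le_not_le)
lemma lt_I: "(P::srel) \<le> Q \<Longrightarrow> \<not> Q \<le> P \<Longrightarrow> P < Q" by (simp add: less_le_not_le)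
lemma not_all_wit: "Q v u \<Longrightarrow> \<not> P u v \<Longrightarrow> \<not>(\<forall>x y. Q y x \<longrightarrow> P x y)" by blast
lemma not_all_wit2: "P u v \<Longrightarrow> \<not> Q v u \<Longrightarrow> \<not>(\<forall>x y. P x y \<longrightarrow> Q y x)" by blast

lemma Collect_ins: "{g\<in>insert a A. p g} = (if p a then insert a {g\<in>A. p g} else {g\<in>A. p g})"
  "{g\<in>{}. p g} = {}"
  by auto

lemma induced_ins: "induced (insert P F) x y \<longleftrightarrow> P x y \<or> induced F x y" "induced {} x y \<longleftrightarrow> False"
  by (auto simp: induced_def)

lemma Best_mem: "t \<in> Best R r \<longleftrightarrow> t \<in> r \<and> (\<forall>t2\<in>r. \<not> R t2 t)"
  by (auto simp: Best_def)

lemma Impl_emptyI: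
  assumes "\<And>Q. Q \<in> F \<Longrightarrow> \<not> (\<forall>x y. Q y x \<longrightarrow> P x y) \<or> (\<forall>x y. P x y \<longrightarrow> Q y x)"
  shows "Impl F P = {}"
  using assms unfolding Impl_def by blast

locale g2 =
  fixes D :: "tup set" and A B C :: "tup \<Rightarrow> bool"
  assumes AD: "A t \<Longrightarrow> t \<in> D" and BD: "B t \<Longrightarrow> t \<in> D" and CD: "C t \<Longrightarrow> t \<in> D"
    and AB: "A t \<Longrightarrow> \<not> B t" and AC: "A t \<Longrightarrow> \<not> C t" and BC: "B t \<Longrightarrow> \<not> C t"
    and exA: "\<exists>t. A t" and exB: "\<exists>t. B t" and exC: "\<exists>t. C t"
begin

lemma dis: "B t \<Longrightarrow> \<not> A t" "C t \<Longrightarrow> \<not> A t" "C t \<Longrightarrow> \<not> B t"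
  using AB AC BC by blast+

definition "Pr = (\<lambda>x y. B x \<and> C y)"
definition "Qr = (\<lambda>x y. C x \<and> A y \<or> A x \<and> C y)"
definition "Rr = (\<lambda>x y. A x \<and> C y)"
definition "PQ = (\<lambda>x y. B x \<and> A y)"
definition "I2 = (\<lambda>x y. A x \<and> A y \<or> C x \<and> C y)"

lemmas rdefs = Pr_def Qr_def Rr_def PQ_def I2_def
lemmas defs = rdefs compose_def le_rel

lemma wit: obtains a b c where "A a" "B b" "C c" "\<not> B a" "\<not> C a" "\<not> A b" "\<not> C b" "\<not> A c" "\<not> B c"
  using exA exB exC AB AC BC dis by blast

lemma ne: "\<exists>x y. Pr x y" "\<exists>x y. Qr x y" "\<exists>x y. Rr x y" "\<exists>x y. PQ x y" "\<exists>x y. I2 x y"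
  using exA exB exC by (auto simp: rdefs)

definition "wa = (SOME t. A t)"
definition "wb = (SOME t. B t)"
definition "wc = (SOME t. C t)"

lemma wABC: "A wa" "B wb" "C wc"
  using someI_ex[OF exA] someI_ex[OF exB] someI_ex[OF exC] by (auto simp: wa_def wb_def wc_def)

lemma wsimp[simp]: "A wa" "B wb" "C wc" "\<not> B wa" "\<not> C wa" "\<not> A wb" "\<not> C wb" "\<not> A wc" "\<not> B wc"
  using wABC AB AC BC dis by blast+

lemma lt0: "Rr < Qr" by (rule lt_I, simp add: le_rel rdefs, rule not_le_wit[of _ wc wa]) (simp_all add: rdefs)
lemma lt1: "\<not> Rr < Pr" by (rule not_lt1, rule not_le_wit[of _ wa wc]) (simp_all add: rdefs)
lemma lt2: "\<not> Pr < Pr" by simp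
lemma lt3: "\<not> Pr < Qr" by (rule not_lt1, rule not_le_wit[of _ wb wc]) (simp_all add: rdefs)
lemma lt4: "\<not> Pr < Rr" by (rule not_lt1, rule not_le_wit[of _ wb wc]) (simp_all add: rdefs)
lemma lt5: "\<not> Pr < PQ" by (rule not_lt1, rule not_le_wit[of _ wb wc]) (simp_all add: rdefs)
lemma lt6: "\<not> Pr < I2" by (rule not_lt1, rule not_le_wit[of _ wb wc]) (simp_all add: rdefs)
lemma lt7: "\<not> Qr < Pr" by (rule not_lt1, rule not_le_wit[of _ wa wc]) (simp_all add: rdefs)
lemma lt8: "\<not> Qr < Qr" by simp
lemma lt9: "\<not> Qr < Rr" by (rule not_lt1, rule not_le_wit[of _ wc wa]) (simp_all add: rdefs)
lemma lt10: "\<not> Qr < PQ" by (rule not_lt1, rule not_le_wit[of _ wa wc]) (simp_all add: rdefs)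
lemma lt11: "\<not> Qr < I2" by (rule not_lt1, rule not_le_wit[of _ wa wc]) (simp_all add: rdefs)
lemma lt12: "\<not> PQ < Pr" by (rule not_lt1, rule not_le_wit[of _ wb wa]) (simp_all add: rdefs)
lemma lt13: "\<not> PQ < Qr" by (rule not_lt1, rule not_le_wit[of _ wb wa]) (simp_all add: rdefs)
lemma lt14: "\<not> PQ < Rr" by (rule not_lt1, rule not_le_wit[of _ wb wa]) (simp_all add: rdefs)
lemma lt15: "\<not> PQ < PQ" by simp
lemma lt16: "\<not> PQ < I2" by (rule not_lt1, rule not_le_wit[of _ wb wa]) (simp_all add: rdefs)
lemma lt17: "\<not> I2 < Pr" by (rule not_lt1, rule not_le_wit[of _ wa wa]) (simp_all add: rdefs)
lemma lt18: "\<not> I2 < Qr" by (rule not_lt1, rule not_le_wit[of _ wa wa]) (simp_all add: rdefs)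
lemma lt19: "\<not> I2 < Rr" by (rule not_lt1, rule not_le_wit[of _ wa wa]) (simp_all add: rdefs)
lemma lt20: "\<not> I2 < PQ" by (rule not_lt1, rule not_le_wit[of _ wa wa]) (simp_all add: rdefs)
lemma lt21: "\<not> I2 < I2" by simp
lemmas lt = lt0 lt1 lt2 lt3 lt4 lt5 lt6 lt7 lt8 lt9 lt10 lt11 lt12 lt13 lt14 lt15 lt16 lt17 lt18 lt19 lt20 lt21

lemma compPQ: "compose D Pr Qr = PQ"
proof -
  obtain a b c where w: "A a" "B b" "C c" "\<not> B a" "\<not> C a" "\<not> A b" "\<not> C b" "\<not> A c" "\<not> B c"
    by (rule wit)
  have "compose D Pr Qr x y \<longleftrightarrow> PQ x y" for x y
  proof
    assume "compose D Pr Qr x y"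
    then obtain z where "Pr x z" "Qr z y" by (auto simp: compose_def)
    then show "PQ x y" using dis unfolding rdefs by auto
  next
    assume h: "PQ x y"
    then have "c \<in> D \<and> Pr x c \<and> Qr c y" using h w CD unfolding rdefs by auto
    then show "compose D Pr Qr x y" unfolding compose_def by blast
  qed
  then show ?thesis by (intro ext) simp
qed

lemma compI2: "compose D Qr Qr = I2"
proof -
  obtain a b c where w: "A a" "B b" "C c" "\<not> B a" "\<not> C a" "\<not> A b" "\<not> C b" "\<not> A c" "\<not> B c"
    by (rule wit)
  have "compose D Qr Qr x y \<longleftrightarrow> I2 x y" for x y
  proof
    assume "compose D Qr Qr x y"
    then obtain z where "Qr x z" "Qr z y" by (auto simp: compose_def)
    then show "I2 x y" using dis unfolding rdefs by auto
  next
    assume h: "I2 x y"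
    show "compose D Qr Qr x y"
    proof (cases "A y")
      case True
      then have "c \<in> D \<and> Qr x c \<and> Qr c y" using h w CD dis unfolding rdefs by auto
      then show ?thesis unfolding compose_def by blast
    next
      case False
      then have "a \<in> D \<and> Qr x a \<and> Qr a y" using h w AD unfolding rdefs by auto
      then show ?thesis unfolding compose_def by blast
    qed
  qed
  then show ?thesis by (intro ext) simp
qed

lemma cp0: "compose D I2 I2 \<le> I2"
  unfolding le_rel compose_def rdefs using AB AC BC by blast
lemma cp1: "\<forall>x y. \<not> compose D I2 PQ x y"
  unfolding le_rel compose_def rdefs using AB AC BC by blast
lemma cp2: "\<forall>x y. \<not> compose D I2 Pr x y"
  unfolding le_rel compose_def rdefs using AB AC BC by blast
lemma cp3: "compose D I2 Qr \<le> Qr"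
  unfolding le_rel compose_def rdefs using AB AC BC by blast
lemma cp4: "compose D PQ I2 \<le> PQ"
  unfolding le_rel compose_def rdefs using AB AC BC by blast
lemma cp5: "\<forall>x y. \<not> compose D PQ PQ x y"
  unfolding le_rel compose_def rdefs using AB AC BC by blast
lemma cp6: "\<forall>x y. \<not> compose D PQ Pr x y"
  unfolding le_rel compose_def rdefs using AB AC BC by blast
lemma cp7: "compose D PQ Qr \<le> Pr"
  unfolding le_rel compose_def rdefs using AB AC BC by blast
lemma cp8: "compose D Pr I2 \<le> Pr"
  unfolding le_rel compose_def rdefs using AB AC BC by blast
lemma cp9: "\<forall>x y. \<not> compose D Pr PQ x y"
  unfolding le_rel compose_def rdefs using AB AC BC by blast
lemma cp10: "\<forall>x y. \<not> compose D Pr Pr x y"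
  unfolding le_rel compose_def rdefs using AB AC BC by blast
lemma cp11: "compose D Pr Qr \<le> PQ"
  unfolding le_rel compose_def rdefs using AB AC BC by blast
lemma cp12: "\<forall>x y. \<not> compose D Pr Rr x y"
  unfolding le_rel compose_def rdefs using AB AC BC by blast
lemma cp13: "compose D Qr I2 \<le> Qr"
  unfolding le_rel compose_def rdefs using AB AC BC by blast
lemma cp14: "\<forall>x y. \<not> compose D Qr PQ x y"
  unfolding le_rel compose_def rdefs using AB AC BC by blast
lemma cp15: "\<forall>x y. \<not> compose D Qr Pr x y"
  unfolding le_rel compose_def rdefs using AB AC BC by blast
lemma cp16: "compose D Qr Qr \<le> I2"
  unfolding le_rel compose_def rdefs using AB AC BC by blast
lemma cp17: "compose D Qr Rr \<le> I2"
  unfolding le_rel compose_def rdefs using AB AC BC by blast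
lemma cp18: "compose D Rr I2 \<le> Qr"
  unfolding le_rel compose_def rdefs using AB AC BC by blast
lemma cp19: "\<forall>x y. \<not> compose D Rr PQ x y"
  unfolding le_rel compose_def rdefs using AB AC BC by blast
lemma cp20: "\<forall>x y. \<not> compose D Rr Pr x y"
  unfolding le_rel compose_def rdefs using AB AC BC by blast
lemma cp21: "compose D Rr Qr \<le> I2"
  unfolding le_rel compose_def rdefs using AB AC BC by blast
lemma cp22: "\<forall>x y. \<not> compose D Rr Rr x y"
  unfolding le_rel compose_def rdefs using AB AC BC by blast
lemmas cps = cp0 cp1 cp2 cp3 cp4 cp5 cp6 cp7 cp8 cp9 cp10 cp11 cp12 cp13 cp14 cp15 cp16 cp17 cp18 cp19 cp20 cp21 cp22

lemma T1: "opT D {Pr,Qr,Rr} = {Pr,Qr,PQ,I2}"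
proof -
  have "opT D {Pr,Qr,Rr} = {g\<in>{Pr,Qr,Rr,PQ,I2}. (\<exists>x y. g x y) \<and> \<not>(\<exists>h\<in>{Pr,Qr,Rr,PQ,I2}. g < h)}"
  proof (rule opT_char)
    show "{Pr,Qr,Rr,PQ,I2} \<subseteq> comps D {Pr,Qr,Rr}" using comps.base[of Pr "{Pr,Qr,Rr}" D] comps.base[of Qr "{Pr,Qr,Rr}" D]
        comps.base[of Rr "{Pr,Qr,Rr}" D]
        comps.step[of Pr "{Pr,Qr,Rr}" Qr D] comps.step[of Qr "{Pr,Qr,Rr}" Qr D] compPQ compI2
      by auto
  next
    fix P Q assume "P \<in> {Pr,Qr,Rr}" "Q \<in> {Pr,Qr,Rr,PQ,I2}"
    then show "(\<exists>g\<in>{Pr,Qr,Rr,PQ,I2}. compose D P Q \<le> g) \<or> (\<forall>x y. \<not> compose D P Q x y)"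
      by (elim insertE emptyE; simp add: cps)
  qed auto
  also have "\<dots> = {Pr,Qr,PQ,I2}" by (simp only: Collect_ins) (simp add: ne lt)
  finally show ?thesis .
qed

lemma T2: "opT D {Pr,Qr,PQ,I2} = {Pr,Qr,PQ,I2}"
proof -
  have "opT D {Pr,Qr,PQ,I2} = {g\<in>{Pr,Qr,PQ,I2}. (\<exists>x y. g x y) \<and> \<not>(\<exists>h\<in>{Pr,Qr,PQ,I2}. g < h)}"
  proof (rule opT_char)
    show "{Pr,Qr,PQ,I2} \<subseteq> comps D {Pr,Qr,PQ,I2}" by (rule subsetI) (rule comps.base)
  next
    fix P Q assume "P \<in> {Pr,Qr,PQ,I2}" "Q \<in> {Pr,Qr,PQ,I2}"
    then show "(\<exists>g\<in>{Pr,Qr,PQ,I2}. compose D P Q \<le> g) \<or> (\<forall>x y. \<not> compose D P Q x y)"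
      by (elim insertE emptyE; simp add: cps)
  qed auto
  also have "\<dots> = {Pr,Qr,PQ,I2}" by (simp only: Collect_ins) (simp add: ne lt)
  finally show ?thesis .
qed

lemma T3: "opT D {Pr,Rr} = {Pr,Rr}"
proof -
  have "opT D {Pr,Rr} = {g\<in>{Pr,Rr}. (\<exists>x y. g x y) \<and> \<not>(\<exists>h\<in>{Pr,Rr}. g < h)}"
  proof (rule opT_char)
    show "{Pr,Rr} \<subseteq> comps D {Pr,Rr}" by (rule subsetI) (rule comps.base)
  next
    fix P Q assume "P \<in> {Pr,Rr}" "Q \<in> {Pr,Rr}"
    then show "(\<exists>g\<in>{Pr,Rr}. compose D P Q \<le> g) \<or> (\<forall>x y. \<not> compose D P Q x y)"
      by (elim insertE emptyE; simp add: cps)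
  qed auto
  also have "\<dots> = {Pr,Rr}" by (simp only: Collect_ins) (simp add: ne lt)
  finally show ?thesis .
qed

lemma cl1: "cleanup {Pr,Qr,PQ,I2} = {Pr,Qr,PQ,I2}"
  unfolding cleanup_def by (simp only: Collect_ins) (simp add: ne lt)

lemma cl2: "cleanup {Pr,Rr} = {Pr,Rr}"
  unfolding cleanup_def by (simp only: Collect_ins) (simp add: ne lt)

lemma asy0: "\<not> (\<forall>x y. Pr y x \<longrightarrow> Pr x y)" by (rule not_all_wit[of _ wb wc]) (simp_all add: rdefs)
lemma asy1: "\<not> (\<forall>x y. Pr y x \<longrightarrow> Qr x y)" by (rule not_all_wit[of _ wb wc]) (simp_all add: rdefs)
lemma asy2: "\<not> (\<forall>x y. Pr y x \<longrightarrow> PQ x y)" by (rule not_all_wit[of _ wb wc]) (simp_all add: rdefs)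
lemma asy3: "\<not> (\<forall>x y. Pr y x \<longrightarrow> I2 x y)" by (rule not_all_wit[of _ wb wc]) (simp_all add: rdefs)
lemma asy4: "\<not> (\<forall>x y. Qr y x \<longrightarrow> Pr x y)" by (rule not_all_wit[of _ wc wa]) (simp_all add: rdefs)
lemma asy5: "\<not> (\<forall>x y. Qr y x \<longrightarrow> PQ x y)" by (rule not_all_wit[of _ wc wa]) (simp_all add: rdefs)
lemma asy6: "\<not> (\<forall>x y. Qr y x \<longrightarrow> I2 x y)" by (rule not_all_wit[of _ wc wa]) (simp_all add: rdefs)
lemma asy7: "\<not> (\<forall>x y. PQ y x \<longrightarrow> Pr x y)" by (rule not_all_wit[of _ wb wa]) (simp_all add: rdefs)
lemma asy8: "\<not> (\<forall>x y. PQ y x \<longrightarrow> Qr x y)" by (rule not_all_wit[of _ wb wa]) (simp_all add: rdefs)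
lemma asy9: "\<not> (\<forall>x y. PQ y x \<longrightarrow> PQ x y)" by (rule not_all_wit[of _ wb wa]) (simp_all add: rdefs)
lemma asy10: "\<not> (\<forall>x y. PQ y x \<longrightarrow> I2 x y)" by (rule not_all_wit[of _ wb wa]) (simp_all add: rdefs)
lemma asy11: "\<not> (\<forall>x y. I2 y x \<longrightarrow> Pr x y)" by (rule not_all_wit[of _ wa wa]) (simp_all add: rdefs)
lemma asy12: "\<not> (\<forall>x y. I2 y x \<longrightarrow> Qr x y)" by (rule not_all_wit[of _ wa wa]) (simp_all add: rdefs)
lemma asy13: "\<not> (\<forall>x y. I2 y x \<longrightarrow> PQ x y)" by (rule not_all_wit[of _ wa wa]) (simp_all add: rdefs)
lemma asy14: "\<not> (\<forall>x y. Pr y x \<longrightarrow> Rr x y)" by (rule not_all_wit[of _ wb wc]) (simp_all add: rdefs)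
lemma asy15: "\<not> (\<forall>x y. Qr y x \<longrightarrow> Rr x y)" by (rule not_all_wit[of _ wa wc]) (simp_all add: rdefs)
lemma asy16: "\<not> (\<forall>x y. Rr y x \<longrightarrow> Pr x y)" by (rule not_all_wit[of _ wa wc]) (simp_all add: rdefs)
lemma asy17: "\<not> (\<forall>x y. Rr y x \<longrightarrow> Rr x y)" by (rule not_all_wit[of _ wa wc]) (simp_all add: rdefs)
lemmas asy = asy0 asy1 asy2 asy3 asy4 asy5 asy6 asy7 asy8 asy9 asy10 asy11 asy12 asy13 asy14 asy15 asy16 asy17

lemma sym: "\<forall>x y. Qr x y \<longrightarrow> Qr y x" "\<forall>x y. I2 x y \<longrightarrow> I2 y x"
  unfolding rdefs by blast+

lemma symD: "\<not> (\<forall>x y. Qr y x \<longrightarrow> Qr x y) \<or> (\<forall>x y. Qr x y \<longrightarrow> Qr y x)"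
  "\<not> (\<forall>x y. I2 y x \<longrightarrow> I2 x y) \<or> (\<forall>x y. I2 x y \<longrightarrow> I2 y x)"
  using sym by blast+

lemma st1: "stable {Pr,Qr,PQ,I2}"
  unfolding stable_def
proof (intro ballI Impl_emptyI)
  fix P Q assume "P \<in> {Pr,Qr,PQ,I2}" "Q \<in> {Pr,Qr,PQ,I2}"
  then show "\<not> (\<forall>x y. Q y x \<longrightarrow> P x y) \<or> (\<forall>x y. P x y \<longrightarrow> Q y x)"
    by (elim insertE emptyE; hypsubst; simp only: asy symD simp_thms)
qed

lemma st2: "stable {Pr,Rr}"
  unfolding stable_def
proof (intro ballI Impl_emptyI)
  fix P Q assume "P \<in> {Pr,Rr}" "Q \<in> {Pr,Rr}"
  then show "\<not> (\<forall>x y. Q y x \<longrightarrow> P x y) \<or> (\<forall>x y. P x y \<longrightarrow> Q y x)"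
    by (elim insertE emptyE; hypsubst; simp only: asy symD simp_thms)
qed

lemma ImplP: "Impl {Pr,Qr,Rr} Pr = {}"
proof (intro Impl_emptyI)
  fix Q assume "Q \<in> {Pr,Qr,Rr}"
  then show "\<not> (\<forall>x y. Q y x \<longrightarrow> Pr x y) \<or> (\<forall>x y. Pr x y \<longrightarrow> Q y x)"
    by (elim insertE emptyE; hypsubst; simp only: asy symD simp_thms)
qed

lemma ImplR: "Impl {Pr,Qr,Rr} Rr = {}"
proof (intro Impl_emptyI)
  fix Q assume "Q \<in> {Pr,Qr,Rr}"
  then show "\<not> (\<forall>x y. Q y x \<longrightarrow> Rr x y) \<or> (\<forall>x y. Rr x y \<longrightarrow> Q y x)"
    by (elim insertE emptyE; hypsubst; simp only: asy symD simp_thms)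
qed

lemma ImplQ: "Impl {Pr,Qr,Rr} Qr = {Rr}"
proof -
  have c: "((\<forall>x y. Rr y x \<longrightarrow> Qr x y) \<and> \<not> (\<forall>x y. Qr x y \<longrightarrow> Rr y x)) = True"
  proof -
    have "\<forall>x y. Rr y x \<longrightarrow> Qr x y" by (simp add: rdefs)
    moreover have "\<not> (\<forall>x y. Qr x y \<longrightarrow> Rr y x)" by (rule not_all_wit2[of _ wa wc]) (simp_all add: rdefs)
    ultimately show ?thesis by (simp only: simp_thms)
  qed
  have n1: "((\<forall>x y. Pr y x \<longrightarrow> Qr x y) \<and> \<not> (\<forall>x y. Qr x y \<longrightarrow> Pr y x)) = False"
    using asy by blast
  have n2: "((\<forall>x y. Qr y x \<longrightarrow> Qr x y) \<and> \<not> (\<forall>x y. Qr x y \<longrightarrow> Qr y x)) = False"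
    using sym(1) by blast
  show ?thesis unfolding Impl_def by (simp only: Collect_ins c n1 n2 if_True if_False)
qed

lemma rnd: "round {Pr,Qr,Rr} = {Pr,Rr}"
proof -
  have e0: "Qr x y \<and> \<not> Rr y x \<longleftrightarrow> Rr x y" for x y
    using AB AC BC dis unfolding rdefs by blast
  have e: "(\<lambda>x y. Qr x y \<and> (\<forall>Q\<in>{Rr}. \<not> Q y x)) = Rr"
    by (rule ext, rule ext) (use e0 in simp)
  let ?f = "\<lambda>P. if Impl {Pr,Qr,Rr} P = {} then P
                   else (\<lambda>x y. P x y \<and> (\<forall>Q\<in>Impl {Pr,Qr,Rr} P. \<not> Q y x))"
  have f1: "?f Qr = Rr" unfolding ImplQ using e by simp
  have f2: "?f Pr = Pr" unfolding ImplP by simp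
  have f3: "?f Rr = Rr" unfolding ImplR by simp
  have "round {Pr,Qr,Rr} = ?f ` {Pr,Qr,Rr}" unfolding round_def ..
  also have "\<dots> = {?f Pr, ?f Qr, ?f Rr}" by (simp only: image_insert image_empty)
  finally show ?thesis using f1 f2 f3 by simp
qed

lemma nst: "\<not> stable {Pr,Qr,Rr}"
  using ImplQ by (auto simp: stable_def)

lemma TST: "apply_ops D [T,S,T] {Pr,Qr,Rr} = {Pr,Qr,PQ,I2}"
  by (simp add: apply_ops_def apply_op_def T1 opS_stable[OF st1] cl1 T2)

lemma STST: "apply_ops D [S,T,S,T] {Pr,Qr,Rr} = {Pr,Rr}"
  by (simp add: apply_ops_def apply_op_def opS_one[OF nst] rnd st2 cl2 T3 opS_stable)

lemma diff2: assumes "b \<in> r" "B b" shows "{t\<in>r. A t} \<subseteq>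
  Best (strict (apply_ops D [S,T,S,T] {Pr,Qr,Rr})) r - Best (strict (apply_ops D [T,S,T] {Pr,Qr,Rr})) r"
proof
  fix t assume t: "t \<in> {t\<in>r. A t}"
  then have tr: "t \<in> r" and At: "A t" by auto
  have s1: "\<not> strict {Pr,Rr} t2 t" for t2
  proof -
    have "\<not> (Pr t2 t \<or> Rr t2 t)" using At AC by (simp add: rdefs)
    then show ?thesis by (simp only: strict_def induced_ins simp_thms)
  qed
  have s2: "strict {Pr,Qr,PQ,I2} b t"
  proof -
    have "PQ b t" using At assms by (simp add: rdefs)
    moreover have "\<not> B t" "\<not> C t" "\<not> C b" "\<not> A b" using At assms(2) AB AC BC dis by blast+
    ultimately have "PQ b t" "\<not> (Pr t b \<or> Qr t b \<or> PQ t b \<or> I2 t b)" by (simp_all add: rdefs)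
    then show ?thesis by (simp only: strict_def induced_ins simp_thms)
  qed
  show "t \<in> Best (strict (apply_ops D [S,T,S,T] {Pr,Qr,Rr})) r - Best (strict (apply_ops D [T,S,T] {Pr,Qr,Rr})) r"
    unfolding TST STST Diff_iff Best_mem using s1 s2 assms tr by blast
qed

end

definition mk :: "nat \<Rightarrow> tup" where "mk v = (\<lambda>i. if i = 0 then Some v else None)"

lemma mk_inj: "mk a = mk b \<longleftrightarrow> a = b"
  by (auto simp: mk_def fun_eq_iff)

lemma mk0: "mk v 0 = Some v" by (simp add: mk_def)

lemma mk_tup: "v \<le> n \<Longrightarrow> mk v \<in> tuples 1 (\<lambda>_. {0..n})"
  by (auto simp: tuples_def mk_def split: if_splits)

lemma card_diff_le:
  assumes "finite r" shows "card (Best R r - Best R' r) \<le> card r"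
  by (rule card_mono[OF assms]) (auto simp: Best_def)

lemma DiffBest_bounds:
  assumes ex: "taxonomies_ok d V le" "formula_ok d V le F" "finite r" "r \<subseteq> tuples d V" "card r = n"
  shows "card (Best (strict (apply_ops (tuples d V) X (init_sem d V le F))) r
              - Best (strict (apply_ops (tuples d V) Y (init_sem d V le F))) r) \<le> DiffBest X Y n"
    and "DiffBest X Y n \<le> n"
proof -
  let ?S = "{card (Best (strict (apply_ops (tuples d V) X (init_sem d V le F))) r
                              - Best (strict (apply_ops (tuples d V) Y (init_sem d V le F))) r)
       | d V le F r. taxonomies_ok d V le \<and> formula_ok d V le F \<and>
                     finite r \<and> r \<subseteq> tuples d V \<and> card r = n}"
  have bd: "x \<le> n" if "x \<in> ?S" for x
  proof -
    from that obtain d' V' le' F' r' where x: "x = card (Best (strict (apply_ops (tuples d' V') X (init_sem d' V' le' F'))) r'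
                              - Best (strict (apply_ops (tuples d' V') Y (init_sem d' V' le' F'))) r')"
      and fr: "finite r'" and cr: "card r' = n"
      unfolding mem_Collect_eq by blast
    show ?thesis unfolding x using card_diff_le[OF fr] cr by simp
  qed
  have mem: "card (Best (strict (apply_ops (tuples d V) X (init_sem d V le F))) r
              - Best (strict (apply_ops (tuples d V) Y (init_sem d V le F))) r) \<in> ?S"
    unfolding mem_Collect_eq
    by (rule exI[of _ d], rule exI[of _ V], rule exI[of _ le], rule exI[of _ F], rule exI[of _ r])
       (simp add: ex)
  have bdd: "bdd_above ?S" by (rule bdd_aboveI) (rule bd)
  show "card (Best (strict (apply_ops (tuples d V) X (init_sem d V le F))) r
              - Best (strict (apply_ops (tuples d V) Y (init_sem d V le F))) r) \<le> DiffBest X Y n"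
    unfolding DiffBest_def by (rule cSup_upper[OF mem bdd])
  have ne: "?S \<noteq> {}" using mem by blast
  show "DiffBest X Y n \<le> n"
    unfolding DiffBest_def by (rule cSup_least[OF ne bd])
qed

definition "Vn n = (\<lambda>_::nat. {0..n::nat})"
definition eqo :: "nat \<Rightarrow> nat \<Rightarrow> nat \<Rightarrow> bool" where "eqo i a b \<longleftrightarrow> a = b"

lemma tax: "taxonomies_ok 1 (Vn n) eqo"
  unfolding taxonomies_ok_def
proof (intro allI impI conjI ballI)
  fix i :: nat
  show "finite (Vn n i)" unfolding Vn_def by (rule finite_atLeastAtMost)
  fix a assume "a \<in> Vn n i" show "eqo i a a" unfolding eqo_def by (rule refl)
next
  fix i a b assume "eqo i a b \<and> eqo i b a" then show "a = b" unfolding eqo_def by blast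
next
  fix i a b c assume "eqo i a b \<and> eqo i b c" then show "eqo i a c" unfolding eqo_def by blast
qed

lemma Vn_mem: "v \<in> Vn n i \<longleftrightarrow> v \<le> n" by (simp add: Vn_def)

lemma atom_ok_V: "v \<le> n \<Longrightarrow> atom_ok 1 (Vn n) (Le w 0 v)" "v \<le> n \<Longrightarrow> atom_ok 1 (Vn n) (NLe w 0 v)"
  by (simp_all add: Vn_def)

definition "rr n = insert (mk 0) (mk ` {2..n})"

lemma rr_props: assumes "n \<ge> 2"
  shows "finite (rr n)" "rr n \<subseteq> tuples 1 (Vn n)" "card (rr n) = n" "mk 0 \<in> rr n"
proof -
  show "finite (rr n)" by (simp add: rr_def)
  show "rr n \<subseteq> tuples 1 (Vn n)" using mk_tup[of _ n] by (auto simp: rr_def Vn_def)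
  show "mk 0 \<in> rr n" by (simp add: rr_def)
  have inj: "inj_on mk {2..n}" by (auto simp: inj_on_def mk_inj)
  have "mk 0 \<notin> mk ` {2..n}" by (auto simp: mk_inj)
  then have "card (rr n) = Suc (card (mk ` {2..n}))" by (simp add: rr_def)
  also have "\<dots> = Suc (card {2..n})" using card_image[OF inj] by simp
  also have "\<dots> = n" using assms by simp
  finally show "card (rr n) = n" .
qed

lemma card_A: assumes "n \<ge> 2" and "\<And>v. 2 \<le> v \<Longrightarrow> v \<le> n \<Longrightarrow> A (mk v)"
  shows "n - 1 \<le> card {t\<in>rr n. A t}"
proof -
  have inj: "inj_on mk {2..n}" by (auto simp: inj_on_def mk_inj)
  have "mk ` {2..n} \<subseteq> {t\<in>rr n. A t}" using assms(2) by (auto simp: rr_def)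
  then have "card (mk ` {2..n}) \<le> card {t\<in>rr n. A t}"
    by (rule card_mono[rotated]) (simp add: rr_def)
  then show ?thesis using card_image[OF inj] by simp
qed

definition "F1 = [ [[Le VX 0 0, NLe VY 0 0],[NLe VX 0 0, Le VY 0 0]], [[Le VX 0 0, NLe VY 0 0]] ]"

lemma claim1: assumes n2: "n \<ge> 2"
  shows "n - 1 \<le> DiffBest [T,S,T] [S,T,S,T] n \<and> DiffBest [T,S,T] [S,T,S,T] n \<le> n"
proof -
  let ?D = "tuples 1 (Vn n)"
  define A where "A = (\<lambda>t. t \<in> ?D \<and> (\<exists>a. t 0 = Some a \<and> a \<noteq> 0))"
  define B where "B = (\<lambda>t. t \<in> ?D \<and> t 0 = Some 0)"
  have w: "mk 0 \<in> ?D" "mk 2 \<in> ?D" using mk_tup[of _ n] n2 by (auto simp: Vn_def)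
  interpret g1 ?D A B
  proof
    show "\<exists>t. A t" using w by (auto simp: A_def mk0)
    show "\<exists>t. B t" using w by (auto simp: B_def mk0)
  qed (auto simp: A_def B_def)
  have s1: "stmt_sem 1 (Vn n) eqo [[Le VX 0 0, NLe VY 0 0],[NLe VX 0 0, Le VY 0 0]] = P1"
  proof (intro ext)
    fix x y show "stmt_sem 1 (Vn n) eqo [[Le VX 0 0, NLe VY 0 0],[NLe VX 0 0, Le VY 0 0]] x y = P1 x y"
      unfolding stmt_sem_def clause_sem_def P1_def unfolding A_def B_def
      by (cases "x 0"; cases "y 0") (auto simp: eqo_def)
  qed
  have s2: "stmt_sem 1 (Vn n) eqo [[Le VX 0 0, NLe VY 0 0]] = P2"
  proof (intro ext)
    fix x y show "stmt_sem 1 (Vn n) eqo [[Le VX 0 0, NLe VY 0 0]] x y = P2 x y"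
      unfolding stmt_sem_def clause_sem_def P2_def unfolding A_def B_def
      by (cases "x 0"; cases "y 0") (auto simp: eqo_def)
  qed
  have sem: "init_sem 1 (Vn n) eqo F1 = {P1,P2}"
    unfolding init_sem_def F1_def by (simp only: list.set image_insert image_empty s1 s2)
  have c1: "clause_sem eqo [Le VX 0 0, NLe VY 0 0] (mk 0) (mk 2)"
    by (simp add: clause_sem_def eqo_def mk0)
  have c2: "clause_sem eqo [NLe VX 0 0, Le VY 0 0] (mk 2) (mk 0)"
    by (simp add: clause_sem_def eqo_def mk0)
  have fok: "formula_ok 1 (Vn n) eqo F1"
    unfolding formula_ok_def F1_def using c1 c2 w w[unfolded One_nat_def] n2 by (simp add: Vn_mem; blast)
  have "n - 1 \<le> card {t\<in>rr n. A t}"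
    by (rule card_A[OF n2]) (use mk_tup[of _ n] in \<open>auto simp: A_def mk0 Vn_def\<close>)
  also have "\<dots> \<le> card (Best (strict (apply_ops ?D [T,S,T] (init_sem 1 (Vn n) eqo F1))) (rr n)
              - Best (strict (apply_ops ?D [S,T,S,T] (init_sem 1 (Vn n) eqo F1))) (rr n))"
    unfolding sem
    by (rule card_mono) (use rr_props[OF n2] diff1[of "mk 0" "rr n"] w in \<open>auto simp: B_def mk0 Best_def\<close>)
  also have "\<dots> \<le> DiffBest [T,S,T] [S,T,S,T] n"
    by (rule DiffBest_bounds(1)[OF tax fok rr_props(1-3)[OF n2]])
  finally show ?thesis using DiffBest_bounds(2)[OF tax fok rr_props(1-3)[OF n2]] by simp
qed

definition "F2 = [ [[Le VX 0 0, Le VY 0 1]],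
   [[Le VX 0 1, NLe VY 0 0, NLe VY 0 1],[NLe VX 0 0, NLe VX 0 1, Le VY 0 1]],
   [[NLe VX 0 0, NLe VX 0 1, Le VY 0 1]] ]"

lemma claim2: assumes n2: "n \<ge> 2"
  shows "n - 1 \<le> DiffBest [S,T,S,T] [T,S,T] n \<and> DiffBest [S,T,S,T] [T,S,T] n \<le> n"
proof -
  let ?D = "tuples 1 (Vn n)"
  define A where "A = (\<lambda>t. t \<in> ?D \<and> (\<exists>a. t 0 = Some a \<and> a \<noteq> 0 \<and> a \<noteq> 1))"
  define B where "B = (\<lambda>t. t \<in> ?D \<and> t 0 = Some 0)"
  define C where "C = (\<lambda>t. t \<in> ?D \<and> t 0 = Some 1)"
  have w: "mk 0 \<in> ?D" "mk 1 \<in> ?D" "mk 2 \<in> ?D" using mk_tup[of _ n] n2 by (auto simp: Vn_def)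
  interpret g2 ?D A B C
  proof
    show "\<exists>t. A t" using w by (auto simp: A_def mk0)
    show "\<exists>t. B t" using w by (auto simp: B_def mk0)
    show "\<exists>t. C t" using w by (auto simp: C_def mk0)
  qed (auto simp: A_def B_def C_def)
  have s1: "stmt_sem 1 (Vn n) eqo [[Le VX 0 0, Le VY 0 1]] = Pr"
  proof (intro ext)
    fix x y show "stmt_sem 1 (Vn n) eqo [[Le VX 0 0, Le VY 0 1]] x y = Pr x y"
      unfolding stmt_sem_def clause_sem_def Pr_def unfolding C_def B_def
      by (cases "x 0"; cases "y 0") (auto simp: eqo_def)
  qed
  have s2: "stmt_sem 1 (Vn n) eqo [[Le VX 0 1, NLe VY 0 0, NLe VY 0 1],[NLe VX 0 0, NLe VX 0 1, Le VY 0 1]] = Qr"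
  proof (intro ext)
    fix x y show "stmt_sem 1 (Vn n) eqo [[Le VX 0 1, NLe VY 0 0, NLe VY 0 1],[NLe VX 0 0, NLe VX 0 1, Le VY 0 1]] x y = Qr x y"
      unfolding stmt_sem_def clause_sem_def Qr_def unfolding A_def C_def
      by (cases "x 0"; cases "y 0") (auto simp: eqo_def)
  qed
  have s3: "stmt_sem 1 (Vn n) eqo [[NLe VX 0 0, NLe VX 0 1, Le VY 0 1]] = Rr"
  proof (intro ext)
    fix x y show "stmt_sem 1 (Vn n) eqo [[NLe VX 0 0, NLe VX 0 1, Le VY 0 1]] x y = Rr x y"
      unfolding stmt_sem_def clause_sem_def Rr_def unfolding A_def C_def
      by (cases "x 0"; cases "y 0") (auto simp: eqo_def)
  qed
  have sem: "init_sem 1 (Vn n) eqo F2 = {Pr,Qr,Rr}"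
    unfolding init_sem_def F2_def by (simp only: list.set image_insert image_empty s1 s2 s3)
  have c1: "clause_sem eqo [Le VX 0 0, Le VY 0 1] (mk 0) (mk 1)"
    by (simp add: clause_sem_def eqo_def mk0)
  have c2: "clause_sem eqo [Le VX 0 1, NLe VY 0 0, NLe VY 0 1] (mk 1) (mk 2)"
    by (simp add: clause_sem_def eqo_def mk0)
  have c3: "clause_sem eqo [NLe VX 0 0, NLe VX 0 1, Le VY 0 1] (mk 2) (mk 1)"
    by (simp add: clause_sem_def eqo_def mk0)
  have fok: "formula_ok 1 (Vn n) eqo F2"
    unfolding formula_ok_def F2_def using c1 c2 c3 w w[unfolded One_nat_def] n2 by (simp add: Vn_mem; blast)
  have "n - 1 \<le> card {t\<in>rr n. A t}"
    by (rule card_A[OF n2]) (use mk_tup[of _ n] in \<open>auto simp: A_def mk0 Vn_def\<close>)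
  also have "\<dots> \<le> card (Best (strict (apply_ops ?D [S,T,S,T] (init_sem 1 (Vn n) eqo F2))) (rr n)
              - Best (strict (apply_ops ?D [T,S,T] (init_sem 1 (Vn n) eqo F2))) (rr n))"
    unfolding sem
    by (rule card_mono) (use rr_props[OF n2] diff2[of "mk 0" "rr n"] w in \<open>auto simp: B_def mk0 Best_def\<close>)
  also have "\<dots> \<le> DiffBest [S,T,S,T] [T,S,T] n"
    by (rule DiffBest_bounds(1)[OF tax fok rr_props(1-3)[OF n2]])
  finally show ?thesis using DiffBest_bounds(2)[OF tax fok rr_props(1-3)[OF n2]] by simp
qed

lemma theta_lin:
  fixes f :: "nat \<Rightarrow> nat"
  assumes "\<And>n. n \<ge> 2 \<Longrightarrow> n - 1 \<le> f n \<and> f n \<le> n"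
  shows "(\<lambda>n. real (f n)) \<in> \<Theta>(\<lambda>n. real n)"
proof (rule bigthetaI'[of "1/2" 1])
  show "eventually (\<lambda>n. 1/2 * norm (real n) \<le> norm (real (f n)) \<and> norm (real (f n)) \<le> 1 * norm (real n)) at_top"
    unfolding eventually_at_top_linorder
  proof (intro exI allI impI)
    fix n :: nat assume n: "n \<ge> 2"
    then have h: "n - 1 \<le> f n" "f n \<le> n" using assms by auto
    have "real (n - 1) \<le> real (f n)" using h(1) by (simp only: of_nat_le_iff)
    moreover have "real (n - 1) = real n - 1" using n by (simp add: of_nat_diff)
    moreover have "real (f n) \<le> real n" using h(2) by (simp only: of_nat_le_iff)
    moreover have "real n \<ge> 2" using n by simp
    ultimately have "1/2 * real n \<le> real (f n)" "real (f n) \<le> 1 * real n" by linarith+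
    then show "1/2 * norm (real n) \<le> norm (real (f n)) \<and> norm (real (f n)) \<le> 1 * norm (real n)"
      by (simp only: norm_of_nat)
  qed
qed simp_all

theorem mainTheorem12:
  shows "(\<lambda>n. real (DiffBest [T, S, T] [S, T, S, T] n)) \<in> \<Theta>(\<lambda>n. real n)
       \<and> (\<lambda>n. real (DiffBest [S, T, S, T] [T, S, T] n)) \<in> \<Theta>(\<lambda>n. real n)"
proof
  show "(\<lambda>n. real (DiffBest [T, S, T] [S, T, S, T] n)) \<in> \<Theta>(\<lambda>n. real n)"
    by (rule theta_lin) (rule claim1)
  show "(\<lambda>n. real (DiffBest [S, T, S, T] [T, S, T] n)) \<in> \<Theta>(\<lambda>n. real n)"
    by (rule theta_lin) (rule claim2)
qed

end
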